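(* (a) Let $n\geq 3$ and let $H_1\neq H_2$ be $1$-dimensional linear subspaces of $\mathbb{R}^n$. Then: $H_1^\perp+H_2^\perp=\mathbb{R}^n$ and $\{H_1^\perp,H_2^\perp\}$ cannot be partitioned into two nonempty mutually orthogonal subsets; if $E\subset S^{n-1}$ is nonempty, closed, and $S^{n-1}\cap(H_j^\perp+x)\subset E$ for $j=1,2$ and all $x\in E$, then $E=S^{n-1}$; every closed $F\subset\mathbb{R}^n$ invariant under all rotations fixing $H_1$ and all rotations fixing $H_2$ is a union of spheres centered at the origin; and every convex body rotationally symmetric with respect to both $H_1$ and $H_2$ is a ball centered at the origin. (b) Let $n\ge 4$. For every $k\in\mathbb{N}$ there exist pairwise different linear subspaces $H_1,\dots,H_k$ of $\mathbb{R}^n$ with $2\le\dim H_j\le n-2$ and a convex body $K$ in $\mathbb{R}^n$ that is rotationally symmetric with respect to each $H_j$ but is not a ball centered at the origin (so that none of the conclusions in (a), with $H_1,H_2$ replaced by $H_1,\dots,H_k$, hold for them).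
   Context: $H^\perp$ is the orthogonal complement; $S^{n-1}$ the unit sphere. A rotation fixing $H$ is an element of $SO(n)$ acting as the identity on $H$. A set $X$ is rotationally symmetric with respect to an $i$-dimensional subspace $H$ if for every $x\in H$, $X\cap(H^\perp+x)$ is a union of $(n-i-1)$-dimensional spheres centered at $x$. A convex body is a compact convex set with nonempty interior. *)

theory Defs
  imports "HOL-Analysis.Analysis"
begin

definition rotation_fixing :: "(real^'n) set \<Rightarrow> real^'n^'n \<Rightarrow> bool" where
  "rotation_fixing H Q \<longleftrightarrow> rotation_matrix Q \<and> (\<forall>x\<in>H. Q *v x = x)"

definition setsum :: "(real^'n) set \<Rightarrow> (real^'n) set \<Rightarrow> (real^'n) set" where
  "setsum A B = {a + b | a b. a \<in> A \<and> b \<in> B}"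

definition orth_decomposable :: "(real^'n) set set \<Rightarrow> bool" where
  "orth_decomposable F \<longleftrightarrow> (\<exists>A B. A \<union> B = F \<and> A \<inter> B = {} \<and> A \<noteq> {} \<and> B \<noteq> {} \<and>
      (\<forall>U\<in>A. \<forall>V\<in>B. \<forall>u\<in>U. \<forall>v\<in>V. orthogonal u v))"

text \<open>Union of spheres centered at c (radius 0 allowed: the degenerate sphere {c}).\<close>
definition union_of_spheres_at :: "real^'n \<Rightarrow> (real^'n) set \<Rightarrow> bool" where
  "union_of_spheres_at c X \<longleftrightarrow> (\<exists>R \<subseteq> {0..}. X = (\<Union>r\<in>R. sphere c r))"

text \<open>Rotational symmetry with respect to a subspace H (of dimension i): for every x in H,
  the section of X by the affine subspace H^perp + x is a union of (n-i-1)-dimensional spheres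
  centered at x, i.e. of sets (sphere x r) intersected with (H^perp + x), r \<ge> 0.\<close>
definition rot_symmetric :: "(real^'n) set \<Rightarrow> (real^'n) set \<Rightarrow> bool" where
  "rot_symmetric X H \<longleftrightarrow> (\<forall>x\<in>H. \<exists>R \<subseteq> {0..}.
      X \<inter> ((+) x ` orthogonal_comp H) = (\<Union>r\<in>R. sphere x r \<inter> ((+) x ` orthogonal_comp H)))"

definition convex_body :: "(real^'n) set \<Rightarrow> bool" where
  "convex_body K \<longleftrightarrow> compact K \<and> convex K \<and> interior K \<noteq> {}"

definition ball_at_origin :: "(real^'n) set \<Rightarrow> bool" where
  "ball_at_origin K \<longleftrightarrow> (\<exists>r>0. K = cball 0 r)"

end

theory Submission
  imports Defs
begin


definition refl_map :: "real^'n \<Rightarrow> real^'n \<Rightarrow> real^'n" where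
  "refl_map u x = x - (2 * (u \<bullet> x)) *\<^sub>R u"

lemma refl_linear: "linear (refl_map u)"
  by (rule linearI) (auto simp: refl_map_def inner_add_right inner_scaleR_right algebra_simps)

lemma refl_inner: assumes "norm u = 1"
  shows "refl_map u x \<bullet> refl_map u y = x \<bullet> y"
proof -
  have "u \<bullet> u = 1" using assms by (simp add: norm_eq_square)
  then show ?thesis
    by (simp add: refl_map_def inner_diff_left inner_diff_right inner_commute algebra_simps)
qed

lemma refl_orth: "norm u = 1 \<Longrightarrow> orthogonal_transformation (refl_map u)"
  by (simp add: orthogonal_transformation_def refl_linear refl_inner)

lemma refl_invol: assumes "norm u = 1" shows "refl_map u (refl_map u x) = x"
proof -
  have "u \<bullet> u = 1" using assms by (simp add: norm_eq_square)
  then show ?thesis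
    by (simp add: refl_map_def inner_diff_right algebra_simps)
qed

lemma refl_sym: "refl_map u x \<bullet> y = x \<bullet> refl_map u y"
  by (simp add: refl_map_def inner_diff_left inner_diff_right inner_commute algebra_simps)

lemma refl_conj: fixes p v :: "real^'n" assumes "norm p = 1" "norm v = 1"
  shows "refl_map p (refl_map v (refl_map p x)) = refl_map (refl_map p v) x"
proof -
  have "v \<bullet> refl_map p x = refl_map p v \<bullet> x" by (simp add: refl_sym)
  moreover have "refl_map p (refl_map v (refl_map p x)) = refl_map p (refl_map p x) - (2 * (v \<bullet> refl_map p x)) *\<^sub>R refl_map p v"
    by (simp only: refl_map_def[of v] linear_diff[OF refl_linear] linear_cmul[OF refl_linear])
  ultimately show ?thesis using refl_invol[OF assms(1)] by (simp add: refl_map_def[of "refl_map p v"])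
qed

definition RM :: "real^'n \<Rightarrow> real^'n^'n" where "RM u = matrix (refl_map u)"

lemma RM_sq: "norm u = 1 \<Longrightarrow> det (RM u) ^ 2 = 1"
proof -
  assume u: "norm u = 1"
  have "RM u ** RM u = matrix (refl_map u \<circ> refl_map u)"
    by (simp add: RM_def matrix_compose refl_linear)
  also have "refl_map u \<circ> refl_map u = id" using refl_invol[OF u] by auto
  finally have "RM u ** RM u = matrix id" .
  then have "RM u ** RM u = mat 1" by (simp only: matrix_id_mat_1)
  then have "det (RM u ** RM u) = 1" by simp
  then show ?thesis by (simp add: det_mul power2_eq_square)
qed

lemma RM_det_eq: fixes v w :: "real^'n" assumes "norm v = 1" "norm w = 1" shows "det (RM v) = det (RM w)"
proof (cases "v = w")
  case True then show ?thesis by simp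
next
  case False
  define p where "p = (1 / norm (v - w)) *\<^sub>R (v - w)"
  have np: "norm p = 1" using False by (simp add: p_def)
  have vv: "v \<bullet> v = 1" "w \<bullet> w = 1" using assms by (simp_all add: norm_eq_square)
  have nvw: "norm (v - w) ^ 2 = 2 - 2 * (v \<bullet> w)"
    using vv by (simp add: power2_norm_eq_inner inner_diff_left inner_diff_right inner_commute)
  have "refl_map p v = w"
  proof -
    have "p \<bullet> v * norm (v - w) = 1 - v \<bullet> w" using False vv
      by (simp add: p_def inner_diff_left inner_diff_right inner_commute)
    then have "2 * (p \<bullet> v) * norm (v - w) = norm (v-w)^2" using nvw by simp
    then have "2 * (p \<bullet> v) = norm (v - w)" using False by (simp add: power2_eq_square)
    then show ?thesis using False by (simp add: refl_map_def p_def)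
  qed
  then have "refl_map w = refl_map p \<circ> refl_map v \<circ> refl_map p"
    using refl_conj[OF np assms(1)] by auto
  then have "RM w = RM p ** RM v ** RM p"
    by (simp add: RM_def matrix_compose refl_linear linear_compose)
  then have "det (RM w) = det (RM p) ^ 2 * det (RM v)"
    by (simp add: det_mul power2_eq_square)
  then show ?thesis using RM_sq[OF np] by simp
qed

lemma refl_map_swap: fixes y z :: "real^'n" assumes "norm y = norm z" "y \<noteq> z"
  shows "refl_map ((1 / norm (y - z)) *\<^sub>R (y - z)) y = z"
proof -
  define v where "v = (1 / norm (y - z)) *\<^sub>R (y - z)"
  have zz: "z \<bullet> z = y \<bullet> y" using assms(1) by (metis power2_norm_eq_inner)
  have nvw: "norm (y - z) ^ 2 = 2 * (y \<bullet> y) - 2 * (y \<bullet> z)"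
    using zz by (simp add: power2_norm_eq_inner inner_diff_left inner_diff_right inner_commute)
  have "v \<bullet> y * norm (y - z) = y \<bullet> y - y \<bullet> z" using assms
    by (simp add: v_def inner_diff_left inner_diff_right inner_commute)
  then have "2 * (v \<bullet> y) * norm (y - z) = norm (y-z)^2" using nvw by simp
  then have "2 * (v \<bullet> y) = norm (y - z)" using assms by (simp add: power2_eq_square)
  then have "(2 * (v \<bullet> y)) *\<^sub>R v = y - z" using assms by (simp add: v_def)
  then show ?thesis unfolding v_def[symmetric] refl_map_def by simp
qed

lemma rot_exists: fixes h y z :: "real^'n"
  assumes n3: "CARD('n) \<ge> 3" and h: "norm h = 1" and yz: "norm y = norm z" and hh: "y \<bullet> h = z \<bullet> h"
  shows "\<exists>Q. rotation_matrix Q \<and> Q *v h = h \<and> Q *v y = z"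
proof (cases "y = z")
  case True
  then show ?thesis
    by (intro exI[of _ "mat 1"]) (simp add: rotation_matrix_def orthogonal_matrix_id)
next
  case False
  define v where "v = (1 / norm (y - z)) *\<^sub>R (y - z)"
  have nv: "norm v = 1" using False by (simp add: v_def)
  have v1: "refl_map v y = z" unfolding v_def by (rule refl_map_swap[OF yz False])
  have v2: "refl_map v h = h" using hh by (simp add: refl_map_def v_def inner_diff_left inner_diff_right inner_commute)
  have "dim {h, z} \<le> card {h, z}" by (rule dim_le_card) (auto intro: span_base)
  also have "\<dots> \<le> 2" by (simp add: card_insert_if)
  also have "\<dots> < DIM(real^'n)" using n3 by simp
  finally obtain w0 where w0: "w0 \<noteq> 0" "\<And>x. x \<in> span {h, z} \<Longrightarrow> orthogonal w0 x"
    using orthogonal_to_subspace_exists by blast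
  define w where "w = (1 / norm w0) *\<^sub>R w0"
  have nw: "norm w = 1" using w0 by (simp add: w_def)
  have "h \<in> span {h, z}" "z \<in> span {h, z}" by (rule span_base, simp)+
  then have "orthogonal w0 h" "orthogonal w0 z" using w0 by blast+
  then have wh: "w \<bullet> h = 0" "w \<bullet> z = 0" by (auto simp: w_def orthogonal_def)
  have w1: "refl_map w z = z" "refl_map w h = h" using wh by (auto simp: refl_map_def)
  define Q where "Q = RM w ** RM v"
  have Qx: "Q *v x = refl_map w (refl_map v x)" for x
    by (simp add: Q_def RM_def flip: matrix_vector_mul_assoc) (simp add: matrix_works refl_linear)
  have "orthogonal_matrix Q" unfolding Q_def RM_def
    using refl_orth[OF nv] refl_orth[OF nw] orthogonal_matrix_mul orthogonal_transformation_matrix by blast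
  moreover have "det Q = 1"
    using RM_det_eq[OF nw nv] RM_sq[OF nv] by (simp add: Q_def det_mul power2_eq_square)
  ultimately show ?thesis using Qx v1 v2 w1 by (intro exI[of _ Q]) (simp add: rotation_matrix_def)
qed




lemma core:
  fixes h1 h2 y z :: "real^'n" and X :: "(real^'n) set"
  assumes n3: "CARD('n) \<ge> 3" and n1: "norm h1 = 1" and n2: "norm h2 = 1"
    and cc: "\<bar>h1 \<bullet> h2\<bar> < 1" and cl: "closed X"
    and P1: "\<And>y z. y \<in> X \<Longrightarrow> norm z = norm y \<Longrightarrow> z \<bullet> h1 = y \<bullet> h1 \<Longrightarrow> z \<in> X"
    and P2: "\<And>y z. y \<in> X \<Longrightarrow> norm z = norm y \<Longrightarrow> z \<bullet> h2 = y \<bullet> h2 \<Longrightarrow> z \<in> X"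
    and yX: "y \<in> X" and yz: "norm z = norm y"
  shows "z \<in> X"
proof (cases "y = 0")
  case True then show ?thesis using yX yz by simp
next
  case False
  define r where "r = norm y"
  have r0: "r > 0" using False by (simp add: r_def)
  define c where "c = h1 \<bullet> h2"
  define s where "s = sqrt (1 - c^2)"
  have c2: "c^2 < 1" using cc unfolding c_def by (simp add: abs_square_less_1)
  have s0: "s > 0" using c2 by (simp add: s_def)
  have ss: "s^2 = 1 - c^2" using c2 by (simp add: s_def)
  have "dim {h1, h2} \<le> card {h1, h2}" by (rule dim_le_card) (auto intro: span_base)
  also have "\<dots> \<le> 2" by (simp add: card_insert_if)
  also have "\<dots> < DIM(real^'n)" using n3 by simp
  finally obtain w0 where w0: "w0 \<noteq> 0" "\<And>x. x \<in> span {h1, h2} \<Longrightarrow> orthogonal w0 x"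
    using orthogonal_to_subspace_exists by blast
  define e where "e = (1 / norm w0) *\<^sub>R w0"
  have ee: "e \<bullet> e = 1" using w0 by (simp add: e_def flip: power2_norm_eq_inner)
  have "h1 \<in> span {h1, h2}" "h2 \<in> span {h1, h2}" by (rule span_base, simp)+
  then have "orthogonal w0 h1" "orthogonal w0 h2" using w0 by blast+
  then have eh: "e \<bullet> h1 = 0" "e \<bullet> h2 = 0" "h1 \<bullet> e = 0" "h2 \<bullet> e = 0"
    by (auto simp: e_def orthogonal_def inner_commute)
  have hh: "h1 \<bullet> h1 = 1" "h2 \<bullet> h2 = 1" "h2 \<bullet> h1 = c" "h1 \<bullet> h2 = c"
    using n1 n2 by (simp_all add: c_def inner_commute flip: power2_norm_eq_inner)
  define u where "u = (1 / s) *\<^sub>R (h1 - c *\<^sub>R h2)"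
  have uh: "u \<bullet> h2 = 0" "h2 \<bullet> u = 0" "u \<bullet> e = 0" "e \<bullet> u = 0" "u \<bullet> h1 = s"
    using eh hh s0 ss by (auto simp: u_def inner_diff_left inner_diff_right field_simps power2_eq_square)
  have uu: "u \<bullet> u = 1"
    using hh s0 ss by (auto simp: u_def inner_diff_left inner_diff_right inner_commute field_simps power2_eq_square)
  define p where "p a = a *\<^sub>R h1 + sqrt (r^2 - a^2) *\<^sub>R e" for a
  define A where "A = {-r..r} \<inter> p -` X"
  have F0: "norm (p a) = r" "p a \<bullet> h1 = a" "p a \<bullet> h2 = a * c" if "\<bar>a\<bar> \<le> r" for a
  proof -
    have "a^2 \<le> r^2" using power_mono[OF that abs_ge_zero, of 2] by simp
    then have "p a \<bullet> p a = r^2"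
      using hh eh ee by (simp add: p_def inner_add_left inner_add_right power2_eq_square)
    then show "norm (p a) = r" using r0 by (simp add: norm_eq_square)
    show "p a \<bullet> h1 = a" "p a \<bullet> h2 = a * c" using hh eh by (simp_all add: p_def inner_add_left)
  qed
  have F1: "w \<in> X \<longleftrightarrow> w \<bullet> h1 \<in> A" if w: "norm w = r" for w
  proof -
    have ab: "\<bar>w \<bullet> h1\<bar> \<le> r" using Cauchy_Schwarz_ineq2[of w h1] n1 w by simp
    show ?thesis
    proof
      assume "w \<in> X"
      then have "p (w \<bullet> h1) \<in> X" using P1[of w "p (w \<bullet> h1)"] F0[OF ab] w by simp
      then show "w \<bullet> h1 \<in> A" using ab by (simp add: A_def abs_le_iff)
    next
      assume "w \<bullet> h1 \<in> A"
      then have "p (w \<bullet> h1) \<in> X" by (simp add: A_def)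
      then show "w \<in> X" using P1[of "p (w \<bullet> h1)" w] F0[OF ab] w by simp
    qed
  qed
  have F2: "a * c^2 + t * s \<in> A" if a: "a \<in> A" and t: "\<bar>t\<bar> \<le> sqrt (r^2 - a^2 * c^2)" for a t
  proof -
    define T where "T = sqrt (r^2 - a^2 * c^2)"
    have ar: "\<bar>a\<bar> \<le> r" using a by (auto simp: A_def abs_le_iff)
    have "a^2 \<le> r^2" using power_mono[OF ar abs_ge_zero, of 2] by simp
    moreover have "a^2 * c^2 \<le> a^2" using c2 by (simp add: mult_left_le)
    ultimately have T2: "T^2 = r^2 - a^2 * c^2" by (simp add: T_def)
    have tT: "t^2 \<le> T^2" using power_mono[OF t abs_ge_zero, of 2] by (simp add: T_def)
    define q where "q = (a * c) *\<^sub>R h2 + t *\<^sub>R u + sqrt (T^2 - t^2) *\<^sub>R e"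
    have "q \<bullet> q = (a*c)^2 + t^2 + (T^2 - t^2)"
      using hh eh ee uh uu tT by (simp add: q_def inner_add_left inner_add_right power2_eq_square)
    then have "norm q = r" using T2 r0 by (simp add: norm_eq_square power_mult_distrib)
    moreover have "q \<bullet> h2 = p a \<bullet> h2" using hh eh uh F0[OF ar] by (simp add: q_def inner_add_left)
    moreover have "p a \<in> X" using a by (simp add: A_def)
    ultimately have "q \<in> X" using P2[of "p a" q] F0[OF ar] by simp
    then have "q \<bullet> h1 \<in> A" using F1 \<open>norm q = r\<close> by blast
    moreover have "q \<bullet> h1 = a * c^2 + t * s"
      using hh eh uh by (simp add: q_def inner_add_left power2_eq_square)
    ultimately show ?thesis by simp
  qed
  have F2': "b \<in> A" if a: "a \<in> A" and
    lo: "a * c^2 - s * sqrt (r^2 - a^2 * c^2) \<le> b" and hi: "b \<le> a * c^2 + s * sqrt (r^2 - a^2 * c^2)" for a b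
  proof -
    define t where "t = (b - a * c^2) / s"
    have "\<bar>t\<bar> \<le> sqrt (r^2 - a^2 * c^2)" using lo hi s0
      by (simp add: t_def abs_le_iff field_simps)
    from F2[OF a this] show ?thesis using s0 by (simp add: t_def)
  qed
  have F3: "a * c^2 - s * sqrt (r^2 - a^2 * c^2) < a \<and> a < a * c^2 + s * sqrt (r^2 - a^2 * c^2)"
    if ar: "\<bar>a\<bar> < r" for a
  proof -
    define T where "T = sqrt (r^2 - a^2 * c^2)"
    have "a^2 < r^2" using power_strict_mono[OF ar abs_ge_zero, of 2] by simp
    moreover have "a^2 * c^2 + a^2 * s^2 = a^2"
    proof -
      have "a^2 * c^2 + a^2 * s^2 = a^2 * (c^2 + s^2)" by (simp add: distrib_left)
      also have "\<dots> = a^2" using ss by simp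
      finally show ?thesis .
    qed
    ultimately have "(\<bar>a\<bar> * s)^2 < r^2 - a^2 * c^2" by (simp add: power_mult_distrib algebra_simps)
    then have "\<bar>a\<bar> * s < T" unfolding T_def using real_less_rsqrt by blast
    moreover have "a * s \<le> \<bar>a\<bar> * s" "- a * s \<le> \<bar>a\<bar> * s" using s0 mult_right_mono[of a "\<bar>a\<bar>" s] mult_right_mono[of "-a" "\<bar>a\<bar>" s] by simp_all
    ultimately have "a * s < T" "- a * s < T" by linarith+
    then have "s * (a * s) < s * T" "s * (- a * s) < s * T" using s0 mult_strict_left_mono[of "a * s" T s] mult_strict_left_mono[of "- a * s" T s] by simp_all
    then have i1: "a * s^2 < s * T" "- (a * s^2) < s * T" by (simp_all add: power2_eq_square algebra_simps)
    have "a * c^2 + a * s^2 = a * (c^2 + s^2)" by (simp add: distrib_left)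
    then have "a * c^2 = a - a * s^2" using ss by simp
    then show ?thesis using i1 unfolding T_def[symmetric] by linarith
  qed
  have cA: "closed A" unfolding A_def
    by (rule continuous_closed_preimage) (auto simp: p_def intro!: continuous_intros cl)
  have yA: "y \<bullet> h1 \<in> A" using F1[of y] yX r_def by simp
  have yr: "\<bar>y \<bullet> h1\<bar> \<le> r" using Cauchy_Schwarz_ineq2[of y h1] n1 r_def by simp
  define b0 where "b0 = (y \<bullet> h1) * c^2"
  have "(y \<bullet> h1)^2 \<le> r^2" using power_mono[OF yr abs_ge_zero, of 2] by simp
  moreover have "(y \<bullet> h1)^2 * c^2 \<le> (y \<bullet> h1)^2" using c2 by (simp add: mult_left_le)
  ultimately have "(y \<bullet> h1)^2 * c^2 \<le> r^2" by linarith
  then have b0A: "b0 \<in> A" using F2[OF yA, of 0] by (simp add: b0_def)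
  have b0r: "\<bar>b0\<bar> < r"
  proof -
    have "\<bar>b0\<bar> = \<bar>y \<bullet> h1\<bar> * c^2" by (simp add: b0_def abs_mult)
    also have "\<dots> \<le> r * c^2" using yr by (simp add: mult_right_mono)
    also have "\<dots> < r" using r0 c2 by simp
    finally show ?thesis .
  qed
  have allA: "x \<in> A" if x: "-r \<le> x" "x \<le> r" for x
  proof (cases "b0 \<le> x")
    case True
    have "compact (A \<inter> {b0..x})" using cA by (intro closed_Int_compact) auto
    moreover have "A \<inter> {b0..x} \<noteq> {}" using b0A True by auto
    ultimately obtain m where m: "m \<in> A \<inter> {b0..x}" and mx: "\<And>y. y \<in> A \<inter> {b0..x} \<Longrightarrow> y \<le> m"
      using compact_attains_sup by metis
    show ?thesis
    proof (rule ccontr)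
      assume "x \<notin> A"
      with m have mlt: "m < x" by (cases "m = x") auto
      have "\<bar>m\<bar> < r" using m mlt x b0r by auto
      note F3[OF this]
      define b where "b = min x (m * c^2 + s * sqrt (r^2 - m^2 * c^2))"
      have "b \<in> A" using F2'[of m b] m F3[OF \<open>\<bar>m\<bar> < r\<close>] by (auto simp: b_def)
      moreover have "b > m" using mlt F3[OF \<open>\<bar>m\<bar> < r\<close>] by (simp add: b_def)
      moreover have "b0 \<le> b" "b \<le> x" using m mlt F3[OF \<open>\<bar>m\<bar> < r\<close>] by (auto simp: b_def)
      ultimately show False using mx[of b] by auto
    qed
  next
    case False
    have "compact (A \<inter> {x..b0})" using cA by (intro closed_Int_compact) auto
    moreover have "A \<inter> {x..b0} \<noteq> {}" using b0A False by auto
    ultimately obtain m where m: "m \<in> A \<inter> {x..b0}" and mx: "\<And>y. y \<in> A \<inter> {x..b0} \<Longrightarrow> m \<le> y"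
      using compact_attains_inf by metis
    show ?thesis
    proof (rule ccontr)
      assume "x \<notin> A"
      with m have mlt: "x < m" by (cases "m = x") auto
      have "\<bar>m\<bar> < r" using m mlt x b0r by auto
      define b where "b = max x (m * c^2 - s * sqrt (r^2 - m^2 * c^2))"
      have "b \<in> A" using F2'[of m b] m F3[OF \<open>\<bar>m\<bar> < r\<close>] by (auto simp: b_def)
      moreover have "b < m" using mlt F3[OF \<open>\<bar>m\<bar> < r\<close>] by (simp add: b_def)
      moreover have "x \<le> b" "b \<le> b0" using m mlt F3[OF \<open>\<bar>m\<bar> < r\<close>] by (auto simp: b_def)
      ultimately show False using mx[of b] by auto
    qed
  qed
  have "\<bar>z \<bullet> h1\<bar> \<le> r" using Cauchy_Schwarz_ineq2[of z h1] n1 yz r_def by simp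
  then have "z \<bullet> h1 \<in> A" using allA by (auto simp: abs_le_iff)
  then show ?thesis using F1[of z] yz r_def by simp
qed




lemma line_unit:
  fixes H :: "(real^'n) set"
  assumes "subspace H" "dim H = 1"
  shows "\<exists>h. norm h = 1 \<and> H = range (\<lambda>t. t *\<^sub>R h)"
proof -
  obtain B where B: "B \<subseteq> H" "independent B" "H \<subseteq> span B" "card B = dim H"
    using basis_exists by blast
  have "card B = 1" using B(4) assms(2) by simp
  then obtain b where b: "B = {b}" by (rule card_1_singletonE)
  have "b \<noteq> 0" using B(2) b dependent_zero by blast
  have "H = span {b}" using span_subspace[OF B(1) B(3) assms(1)] b by simp
  then have H: "H = range (\<lambda>t. t *\<^sub>R b)" by (simp add: span_singleton)
  define h where "h = (1 / norm b) *\<^sub>R b"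
  have "range (\<lambda>t. t *\<^sub>R b) = range (\<lambda>t. t *\<^sub>R h)"
  proof safe
    fix t show "t *\<^sub>R b \<in> range (\<lambda>t. t *\<^sub>R h)"
      using \<open>b \<noteq> 0\<close> by (intro image_eqI[of _ _ "t * norm b"]) (auto simp: h_def)
  next
    fix t show "t *\<^sub>R h \<in> range (\<lambda>t. t *\<^sub>R b)"
      by (intro image_eqI[of _ _ "t / norm b"]) (auto simp: h_def)
  qed
  moreover have "norm h = 1" using \<open>b \<noteq> 0\<close> by (simp add: h_def)
  ultimately show ?thesis using H by blast
qed

lemma comp_line: fixes h :: "real^'n" shows "orthogonal_comp (range (\<lambda>t. t *\<^sub>R h)) = {x. h \<bullet> x = 0}"
  unfolding orthogonal_comp_def orthogonal_def
proof (intro Collect_cong iffI)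
  fix x assume "\<forall>y\<in>range (\<lambda>t. t *\<^sub>R h). y \<bullet> x = 0"
  then have "(1::real) *\<^sub>R h \<bullet> x = 0" by blast
  then show "h \<bullet> x = 0" by simp
next
  fix x assume "h \<bullet> x = 0"
  then show "\<forall>y\<in>range (\<lambda>t. t *\<^sub>R h). y \<bullet> x = 0" by auto
qed

lemma line_neg: fixes h :: "real^'n" shows "range (\<lambda>t. t *\<^sub>R (- h)) = range (\<lambda>t. t *\<^sub>R h)"
proof safe
  fix t show "t *\<^sub>R (- h) \<in> range (\<lambda>t. t *\<^sub>R h)"
  proof (rule image_eqI)
    show "t *\<^sub>R (- h) = (- t) *\<^sub>R h" by simp
  qed simp
next
  fix t show "t *\<^sub>R h \<in> range (\<lambda>t. t *\<^sub>R (- h))"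
  proof (rule image_eqI)
    show "t *\<^sub>R h = (- t) *\<^sub>R (- h)" by simp
  qed simp
qed

lemma perp2:
  fixes a b :: "real^'n"
  assumes n3: "CARD('n) \<ge> 3"
  shows "\<exists>e. e \<noteq> 0 \<and> a \<bullet> e = 0 \<and> b \<bullet> e = 0"
proof -
  have "dim {a, b} \<le> card {a, b}" by (rule dim_le_card) (auto intro: span_base)
  also have "\<dots> \<le> 2" by (simp add: card_insert_if)
  also have "\<dots> < DIM(real^'n)" using n3 by simp
  finally obtain w0 where w0: "w0 \<noteq> 0" "\<And>x. x \<in> span {a, b} \<Longrightarrow> orthogonal w0 x"
    using orthogonal_to_subspace_exists by blast
  have "a \<in> span {a, b}" "b \<in> span {a, b}" by (rule span_base, simp)+
  then have "orthogonal w0 a" "orthogonal w0 b" using w0 by blast+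
  then show ?thesis using w0 by (auto simp: orthogonal_def inner_commute)
qed

lemma rotsym_P:
  fixes h :: "real^'n" and X :: "(real^'n) set"
  assumes h: "norm h = 1" and rs: "rot_symmetric X (range (\<lambda>t. t *\<^sub>R h))"
    and y: "y \<in> X" and yz: "norm z = norm y" and zh: "z \<bullet> h = y \<bullet> h"
  shows "z \<in> X"
proof -
  have hh: "h \<bullet> h = 1" using h by (simp flip: power2_norm_eq_inner)
  define x where "x = (y \<bullet> h) *\<^sub>R h"
  have "x \<in> range (\<lambda>t. t *\<^sub>R h)" using rangeI[of "\<lambda>t. t *\<^sub>R h" "y \<bullet> h"] by (simp add: x_def)
  from rs[unfolded rot_symmetric_def comp_line, rule_format, OF this]
  obtain R where R: "X \<inter> ((+) x ` {v. h \<bullet> v = 0}) = (\<Union>r\<in>R. sphere x r \<inter> ((+) x ` {v. h \<bullet> v = 0}))"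
    by blast
  have "h \<bullet> (y - x) = 0" using hh by (simp add: x_def inner_diff_right inner_commute)
  then have yo: "y \<in> (+) x ` {v. h \<bullet> v = 0}"
    by (intro image_eqI[of _ _ "y - x"]) auto
  have "h \<bullet> (z - x) = 0" using hh zh by (simp add: x_def inner_diff_right inner_commute)
  then have zo: "z \<in> (+) x ` {v. h \<bullet> v = 0}"
    by (intro image_eqI[of _ _ "z - x"]) auto
  from y yo R obtain r where r: "r \<in> R" "y \<in> sphere x r" by blast
  have d: "dist x z = dist x y"
  proof -
    have "norm z ^ 2 = norm y ^ 2" using yz by simp
    then have "z \<bullet> z = y \<bullet> y" by (simp add: power2_norm_eq_inner)
    then have "(x - z) \<bullet> (x - z) = (x - y) \<bullet> (x - y)" using zh hh
      by (simp add: x_def inner_diff_left inner_diff_right inner_commute)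
    then have "norm (x - z) ^ 2 = norm (x - y) ^ 2" by (simp add: power2_norm_eq_inner)
    then show ?thesis by (simp add: dist_norm)
  qed
  have "z \<in> sphere x r \<inter> ((+) x ` {v. h \<bullet> v = 0})" using r zo d by simp
  then show ?thesis using R r by blast
qed

lemma rot_P:
  fixes h :: "real^'n" and X :: "(real^'n) set"
  assumes n3: "CARD('n) \<ge> 3" and h: "norm h = 1"
    and inv: "\<forall>Q. rotation_fixing (range (\<lambda>t. t *\<^sub>R h)) Q \<longrightarrow> (\<lambda>x. Q *v x) ` X \<subseteq> X"
    and y: "y \<in> X" and yz: "norm z = norm y" and zh: "z \<bullet> h = y \<bullet> h"
  shows "z \<in> X"
proof -
  obtain Q where Q: "rotation_matrix Q" "Q *v h = h" "Q *v y = z"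
    using rot_exists[OF n3 h yz[symmetric] zh[symmetric]] by blast
  have "rotation_fixing (range (\<lambda>t. t *\<^sub>R h)) Q"
    using Q by (auto simp: rotation_fixing_def matrix_vector_mult_scaleR)
  then have "(\<lambda>x. Q *v x) ` X \<subseteq> X" using inv by blast
  then show ?thesis using y Q by blast
qed

lemma sym_convex_ball:
  fixes K :: "(real^'n) set"
  assumes cb: "convex_body K" and sym: "\<And>y z. y \<in> K \<Longrightarrow> norm z = norm y \<Longrightarrow> z \<in> K"
  shows "ball_at_origin K"
proof -
  have cK: "compact K" "convex K" "interior K \<noteq> {}" using cb by (auto simp: convex_body_def)
  then have "K \<noteq> {}" by auto
  have "compact (norm ` K)" using cK(1) by (intro compact_continuous_image continuous_intros)
  moreover have "norm ` K \<noteq> {}" using \<open>K \<noteq> {}\<close> by simp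
  ultimately obtain R where "R \<in> norm ` K" and Rm: "\<And>t. t \<in> norm ` K \<Longrightarrow> t \<le> R"
    using compact_attains_sup by metis
  then obtain p where p: "p \<in> K" "norm p = R" by blast
  have le: "norm x \<le> R" if "x \<in> K" for x using Rm that by blast
  have R0: "R > 0"
  proof (rule ccontr)
    assume "\<not> R > 0"
    have "K \<subseteq> {0}"
    proof
      fix x assume "x \<in> K"
      then have "norm x \<le> 0" using le[OF \<open>x \<in> K\<close>] \<open>\<not> R > 0\<close> by linarith
      then show "x \<in> {0}" by simp
    qed
    then have "interior K \<subseteq> interior {0}" by (rule interior_mono)
    then show False using cK(3) by simp
  qed
  have "- p \<in> K" using sym[OF p(1)] by simp
  then have "(1/2) *\<^sub>R p + (1/2) *\<^sub>R (- p) \<in> K" using convexD[OF cK(2) p(1) \<open>- p \<in> K\<close>, of "1/2" "1/2"] by simp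
  then have z: "0 \<in> K" by simp
  have "K = cball 0 R"
  proof
    show "K \<subseteq> cball 0 R" using le by auto
  next
    show "cball 0 R \<subseteq> K"
    proof
      fix x :: "real^'n" assume "x \<in> cball 0 R"
      then have xR: "norm x \<le> R" by simp
      define l where "l = norm x / R"
      have l: "0 \<le> l" "l \<le> 1" using xR R0 by (auto simp: l_def)
      have "(1 - l) *\<^sub>R 0 + l *\<^sub>R p \<in> K" using convexD[OF cK(2) z p(1), of "1 - l" l] l by simp
      then have q: "l *\<^sub>R p \<in> K" by simp
      have "norm (l *\<^sub>R p) = norm x" using p R0 by (simp add: l_def)
      then show "x \<in> K" using sym[OF q] by simp
    qed
  qed
  then show ?thesis using R0 by (auto simp: ball_at_origin_def)
qed




lemma rotsym_intro:
  fixes X H :: "(real^'n) set"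
  assumes "\<And>x u w. x \<in> H \<Longrightarrow> u \<in> orthogonal_comp H \<Longrightarrow> w \<in> orthogonal_comp H \<Longrightarrow>
            norm u = norm w \<Longrightarrow> x + u \<in> X \<Longrightarrow> x + w \<in> X"
  shows "rot_symmetric X H"
  unfolding rot_symmetric_def
proof
  fix x assume x: "x \<in> H"
  define R where "R = {norm u | u. u \<in> orthogonal_comp H \<and> x + u \<in> X}"
  have "R \<subseteq> {0..}" by (auto simp: R_def)
  moreover have "X \<inter> (+) x ` orthogonal_comp H = (\<Union>r\<in>R. sphere x r \<inter> (+) x ` orthogonal_comp H)"
  proof safe
    fix u assume "x + u \<in> X" "u \<in> orthogonal_comp H"
    then show "x + u \<in> (\<Union>r\<in>R. sphere x r \<inter> (+) x ` orthogonal_comp H)"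
      by (auto simp: R_def dist_norm)
  next
    fix r w assume "r \<in> R" "x + w \<in> sphere x r" "w \<in> orthogonal_comp H"
    then obtain u where u: "u \<in> orthogonal_comp H" "x + u \<in> X" "r = norm u" by (auto simp: R_def)
    have "norm w = norm u" using \<open>x + w \<in> sphere x r\<close> u by (simp add: dist_norm)
    then show "x + w \<in> X" using assms[OF x u(1) \<open>w \<in> orthogonal_comp H\<close>] u by simp
  next
    fix w assume "w \<in> orthogonal_comp H"
    then show "x + w \<in> (+) x ` orthogonal_comp H" by blast
  qed
  ultimately show "\<exists>R\<subseteq>{0..}. X \<inter> (+) x ` orthogonal_comp H = (\<Union>r\<in>R. sphere x r \<inter> (+) x ` orthogonal_comp H)"
    by blast
qed

definition cyl :: "'n \<Rightarrow> (real^'n) set" where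
  "cyl a = {x. norm (x - (x $ a) *\<^sub>R axis a 1) \<le> 1 \<and> \<bar>x $ a\<bar> \<le> 1}"

lemma cyl_rotsym:
  fixes H :: "(real^'n) set"
  assumes sH: "subspace H" and eH: "axis a 1 \<in> H"
  shows "rot_symmetric (cyl a) H"
proof (rule rotsym_intro)
  fix x u w assume x: "x \<in> H" and u: "u \<in> orthogonal_comp H" and w: "w \<in> orthogonal_comp H"
    and nuw: "norm u = norm w" and xu: "x + u \<in> cyl a"
  define d where "d = x - (x $ a) *\<^sub>R axis a 1"
  have dH: "d \<in> H" unfolding d_def using sH x eH by (simp add: subspace_diff subspace_scale)
  have key: "(x + v) $ a = x $ a \<and> norm (x + v - ((x + v) $ a) *\<^sub>R axis a 1) ^ 2 = norm d ^ 2 + norm v ^ 2"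
    if v: "v \<in> orthogonal_comp H" for v
  proof -
    have "orthogonal (axis a 1) v" "orthogonal d v" using v eH dH by (auto simp: orthogonal_comp_def)
    then have "axis a (1::real) \<bullet> v = 0" and dv: "d \<bullet> v = 0" by (auto simp: orthogonal_def)
    then have "v \<bullet> axis a (1::real) = 0" by (simp add: inner_commute)
    then have va: "v $ a = 0" using inner_axis[of v a 1] by (simp add: real_inner_1_right)
    then have e0: "(x + v) $ a = x $ a" by simp
    have e1: "x + v - ((x + v) $ a) *\<^sub>R axis a 1 = d + v" using e0 by (simp add: d_def)
    have e2: "norm (d + v) ^ 2 = norm d ^ 2 + norm v ^ 2"
      using dv by (simp add: power2_norm_eq_inner inner_add_left inner_add_right inner_commute)
    show ?thesis by (subst e1) (simp add: e0 e2 va)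
  qed
  have "norm (x + w - ((x + w) $ a) *\<^sub>R axis a 1) = norm (x + u - ((x + u) $ a) *\<^sub>R axis a 1)"
    using key[OF u] key[OF w] nuw by (metis norm_ge_zero power2_eq_imp_eq)
  moreover have "(x + w) $ a = (x + u) $ a" using key[OF u] key[OF w] by simp
  ultimately show "x + w \<in> cyl a" using xu by (simp add: cyl_def)
qed

lemma cyl_body: fixes a :: "'n::finite" shows "convex_body (cyl a)"
proof -
  define L where "L x = x - (x $ a) *\<^sub>R axis a 1" for x :: "real^'n"
  have lL: "linear L" by (rule linearI) (auto simp: L_def algebra_simps)
  have lA: "linear (\<lambda>x :: real^'n. x $ a)" by (rule linearI) auto
  have eq: "cyl a = L -` cball 0 1 \<inter> (\<lambda>x. x $ a) -` {-1..1}"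
    by (auto simp: cyl_def L_def abs_le_iff)
  have cv: "convex (cyl a)" unfolding eq
    by (intro convex_Int convex_linear_vimage lL lA convex_cball convex_box(1)) (simp add: convex_closed_interval)
  have cLc: "isCont L x" for x using linear_continuous_at[of L x] lL by (simp add: linear_conv_bounded_linear)
  have cAc: "isCont (\<lambda>x :: real^'n. x $ a) x" for x
    using linear_continuous_at[of "\<lambda>x :: real^'n. x $ a" x] lA by (simp add: linear_conv_bounded_linear)
  have cl: "closed (cyl a)" unfolding eq
    by (intro closed_Int continuous_closed_vimage closed_cball closed_real_atLeastAtMost cLc cAc)
  have bd: "bounded (cyl a)"
  proof (rule bounded_subset[OF bounded_cball[of 0 2]])
    show "cyl a \<subseteq> cball 0 2"
    proof
      fix x :: "real^'n" assume "x \<in> cyl a"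
      then have h: "norm (L x) \<le> 1" "\<bar>x $ a\<bar> \<le> 1" by (auto simp: cyl_def L_def)
      have eqx: "x = L x + (x $ a) *\<^sub>R axis a 1" by (simp add: L_def)
      have "norm (L x + (x $ a) *\<^sub>R axis a 1) \<le> norm (L x) + norm ((x $ a) *\<^sub>R axis a (1::real))" by (rule norm_triangle_ineq)
      then have "norm x \<le> norm (L x) + norm ((x $ a) *\<^sub>R axis a (1::real))" unfolding eqx[symmetric] .
      then show "x \<in> cball 0 2" using h by simp
    qed
  qed
  have "ball 0 (1/2) \<subseteq> cyl a"
  proof
    fix x :: "real^'n" assume "x \<in> ball 0 (1/2)"
    then have nx: "norm x < 1/2" by simp
    have ca: "\<bar>x $ a\<bar> \<le> norm x" by (rule component_le_norm_cart)
    have "norm (x - (x $ a) *\<^sub>R axis a 1) \<le> norm x + norm ((x $ a) *\<^sub>R axis a (1::real))" by (rule norm_triangle_ineq4)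
    then show "x \<in> cyl a" using nx ca by (simp add: cyl_def)
  qed
  then have "ball 0 (1/2) \<subseteq> interior (cyl a)" by (intro interior_maximal) auto
  then have "interior (cyl a) \<noteq> {}" by auto
  then show ?thesis using cv cl bd by (simp add: convex_body_def compact_eq_bounded_closed)
qed

lemma cyl_not_ball:
  fixes a b :: "'n::finite"
  assumes "a \<noteq> b"
  shows "\<not> ball_at_origin (cyl a)"
proof
  assume "ball_at_origin (cyl a)"
  then obtain r where r: "r > 0" "cyl a = cball 0 r" by (auto simp: ball_at_origin_def)
  define v :: "real^'n" where "v = axis a 1 + axis b 1"
  have va: "v $ a = 1" using assms by (simp add: v_def axis_def)
  have "axis b (1::real) $ a = 0" using assms by (simp add: axis_def)
  then have "v - (v $ a) *\<^sub>R axis a 1 = axis b 1" by (simp add: va v_def)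
  then have "v \<in> cyl a" using va by (simp add: cyl_def)
  then have "norm v \<le> r" using r by simp
  moreover have "v \<bullet> v = 2" using assms by (simp add: v_def inner_add_left inner_add_right inner_axis_axis)
  then have "norm v = sqrt 2" by (simp add: norm_eq_sqrt_inner)
  moreover have "sqrt 2 > (1::real)" by simp
  ultimately have r1: "r > 1" by linarith
  have "r *\<^sub>R axis a (1::real) \<in> cball 0 r" using r by simp
  then have "r *\<^sub>R axis a (1::real) \<in> cyl a" using r by simp
  then have "\<bar>r\<bar> \<le> 1" by (simp add: cyl_def)
  then show False using r1 by simp
qed




lemma partA:
  fixes H1 H2 :: "(real^'n) set"
  assumes n3: "CARD('n) \<ge> 3" and hyp: "subspace H1 \<and> dim H1 = 1 \<and> subspace H2 \<and> dim H2 = 1 \<and> H1 \<noteq> H2"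
  shows "setsum (orthogonal_comp H1) (orthogonal_comp H2) = UNIV
        \<and> \<not> orth_decomposable {orthogonal_comp H1, orthogonal_comp H2}
        \<and> (\<forall>E. E \<subseteq> sphere 0 1 \<and> E \<noteq> {} \<and> closed E \<and>
              (\<forall>H\<in>{H1, H2}. \<forall>x\<in>E. sphere 0 1 \<inter> ((+) x ` orthogonal_comp H) \<subseteq> E)
              \<longrightarrow> E = sphere 0 1)
        \<and> (\<forall>F. closed F \<and> (\<forall>Q. rotation_fixing H1 Q \<longrightarrow> (\<lambda>x. Q *v x) ` F \<subseteq> F)
                 \<and> (\<forall>Q. rotation_fixing H2 Q \<longrightarrow> (\<lambda>x. Q *v x) ` F \<subseteq> F)
              \<longrightarrow> union_of_spheres_at 0 F)
        \<and> (\<forall>K. convex_body K \<and> rot_symmetric K H1 \<and> rot_symmetric K H2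
              \<longrightarrow> ball_at_origin K)"
proof -
  obtain h1 where h1: "norm h1 = 1" "H1 = range (\<lambda>t. t *\<^sub>R h1)" using line_unit hyp by blast
  obtain h2 where h2: "norm h2 = 1" "H2 = range (\<lambda>t. t *\<^sub>R h2)" using line_unit hyp by blast
  have cc: "\<bar>h1 \<bullet> h2\<bar> < 1"
  proof -
    have le: "\<bar>h1 \<bullet> h2\<bar> \<le> 1" using Cauchy_Schwarz_ineq2[of h1 h2] h1 h2 by simp
    have "\<bar>h1 \<bullet> h2\<bar> \<noteq> 1"
    proof
      assume "\<bar>h1 \<bullet> h2\<bar> = 1"
      then have "h2 = h1 \<or> h2 = - h1" using norm_cauchy_schwarz_abs_eq[of h1 h2] h1 h2 by simp
      then have "H1 = H2"
      proof (elim disjE)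
        assume "h2 = h1" then show ?thesis using h1 h2 by simp
      next
        assume "h2 = - h1"
        then show ?thesis by (simp only: h2(2) h1(2) line_neg)
      qed
      then show False using hyp by simp
    qed
    then show ?thesis using le by simp
  qed
  define c where "c = h1 \<bullet> h2"
  have c2: "c^2 < 1" using cc unfolding c_def by (simp add: abs_square_less_1)
  have hh: "h1 \<bullet> h1 = 1" "h2 \<bullet> h2 = 1" "h2 \<bullet> h1 = c" "h1 \<bullet> h2 = c"
    using h1 h2 by (simp_all add: c_def inner_commute flip: power2_norm_eq_inner)
  have O1: "orthogonal_comp H1 = {x. h1 \<bullet> x = 0}" using h1 comp_line by simp
  have O2: "orthogonal_comp H2 = {x. h2 \<bullet> x = 0}" using h2 comp_line by simp
  have S1: "setsum (orthogonal_comp H1) (orthogonal_comp H2) = UNIV"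
  proof -
    have "x \<in> setsum (orthogonal_comp H1) (orthogonal_comp H2)" for x
    proof -
      define m where "m = (h1 \<bullet> x) / (1 - c^2)"
      define b where "b = m *\<^sub>R (h1 - c *\<^sub>R h2)"
      have "h1 \<bullet> b = m * (1 - c^2)" using hh by (simp add: b_def inner_diff_right power2_eq_square)
      then have "h1 \<bullet> b = h1 \<bullet> x" using c2 by (simp add: m_def)
      then have a: "h1 \<bullet> (x - b) = 0" by (simp add: inner_diff_right)
      have b: "h2 \<bullet> b = 0" using hh by (simp add: b_def inner_diff_right)
      show ?thesis unfolding setsum_def O1 O2 using a b by (intro CollectI exI[of _ "x - b"] exI[of _ b]) simp
    qed
    then show ?thesis by auto
  qed
  obtain e where e: "e \<noteq> 0" "h1 \<bullet> e = 0" "h2 \<bullet> e = 0" using perp2[OF n3] by blast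
  have S2: "\<not> orth_decomposable {orthogonal_comp H1, orthogonal_comp H2}"
  proof
    assume "orth_decomposable {orthogonal_comp H1, orthogonal_comp H2}"
    then obtain A B where AB: "A \<union> B = {orthogonal_comp H1, orthogonal_comp H2}" "A \<noteq> {}" "B \<noteq> {}"
      "\<forall>U\<in>A. \<forall>V\<in>B. \<forall>u\<in>U. \<forall>v\<in>V. orthogonal u v"
      unfolding orth_decomposable_def by blast
    obtain U V where UV: "U \<in> A" "V \<in> B" using AB by blast
    then have "e \<in> U" "e \<in> V" using AB(1) e unfolding O1 O2 by blast+
    then have "orthogonal e e" using AB(4) UV by blast
    then show False using e by (simp add: orthogonal_def)
  qed
  have S3: "\<forall>E. E \<subseteq> sphere 0 1 \<and> E \<noteq> {} \<and> closed E \<and>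
              (\<forall>H\<in>{H1, H2}. \<forall>x\<in>E. sphere 0 1 \<inter> ((+) x ` orthogonal_comp H) \<subseteq> E)
              \<longrightarrow> E = sphere 0 1"
  proof (intro allI impI)
    fix E :: "(real^'n) set"
    assume E: "E \<subseteq> sphere 0 1 \<and> E \<noteq> {} \<and> closed E \<and>
              (\<forall>H\<in>{H1, H2}. \<forall>x\<in>E. sphere 0 1 \<inter> ((+) x ` orthogonal_comp H) \<subseteq> E)"
    have P: "z \<in> E" if "y \<in> E" "norm z = norm y" "z \<bullet> h = y \<bullet> h" "H \<in> {H1, H2}"
       "orthogonal_comp H = {x. h \<bullet> x = 0}" for y z h H
    proof -
      have "norm y = 1" using E that(1) by auto
      then have "z \<in> sphere 0 1" using that(2) by simp
      moreover have "z \<in> (+) y ` orthogonal_comp H"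
        using that(3,5) by (intro image_eqI[of _ _ "z - y"]) (auto simp: inner_diff_right inner_commute)
      ultimately show ?thesis using E that(1,4) by blast
    qed
    obtain y where "y \<in> E" using E by blast
    show "E = sphere 0 1"
    proof
      show "E \<subseteq> sphere 0 1" using E by blast
      show "sphere 0 1 \<subseteq> E"
      proof
        fix z :: "real^'n" assume "z \<in> sphere 0 1"
        moreover have "norm y = 1" using E \<open>y \<in> E\<close> by auto
        ultimately have nz: "norm z = norm y" by simp
        have cE: "closed E" using E by blast
        have P1: "z \<in> E" if "y \<in> E" "norm z = norm y" "z \<bullet> h1 = y \<bullet> h1" for y z
          using P[of y z h1 H1] that O1 by simp
        have P2: "z \<in> E" if "y \<in> E" "norm z = norm y" "z \<bullet> h2 = y \<bullet> h2" for y z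
          using P[of y z h2 H2] that O2 by simp
        show "z \<in> E"
          by (rule core[OF n3 h1(1) h2(1) cc cE P1 P2 \<open>y \<in> E\<close> nz])
      qed
    qed
  qed
  have S4: "\<forall>F. closed F \<and> (\<forall>Q. rotation_fixing H1 Q \<longrightarrow> (\<lambda>x. Q *v x) ` F \<subseteq> F)
                 \<and> (\<forall>Q. rotation_fixing H2 Q \<longrightarrow> (\<lambda>x. Q *v x) ` F \<subseteq> F)
              \<longrightarrow> union_of_spheres_at 0 F"
  proof (intro allI impI)
    fix F :: "(real^'n) set"
    assume F: "closed F \<and> (\<forall>Q. rotation_fixing H1 Q \<longrightarrow> (\<lambda>x. Q *v x) ` F \<subseteq> F)
                 \<and> (\<forall>Q. rotation_fixing H2 Q \<longrightarrow> (\<lambda>x. Q *v x) ` F \<subseteq> F)"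
    have cF: "closed F" using F by blast
    have inv1: "\<forall>Q. rotation_fixing (range (\<lambda>t. t *\<^sub>R h1)) Q \<longrightarrow> (\<lambda>x. Q *v x) ` F \<subseteq> F"
      using F h1(2) by simp
    have inv2: "\<forall>Q. rotation_fixing (range (\<lambda>t. t *\<^sub>R h2)) Q \<longrightarrow> (\<lambda>x. Q *v x) ` F \<subseteq> F"
      using F h2(2) by simp
    have sym: "z \<in> F" if "y \<in> F" "norm z = norm y" for y z
      by (rule core[OF n3 h1(1) h2(1) cc cF rot_P[OF n3 h1(1) inv1] rot_P[OF n3 h2(1) inv2] that])
    have "F = (\<Union>r\<in>norm ` F. sphere 0 r)"
    proof
      show "F \<subseteq> (\<Union>r\<in>norm ` F. sphere 0 r)" by auto
      show "(\<Union>r\<in>norm ` F. sphere 0 r) \<subseteq> F" using sym by auto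
    qed
    then show "union_of_spheres_at 0 F" unfolding union_of_spheres_at_def by (intro exI[of _ "norm ` F"]) auto
  qed
  have S5: "\<forall>K. convex_body K \<and> rot_symmetric K H1 \<and> rot_symmetric K H2 \<longrightarrow> ball_at_origin K"
  proof (intro allI impI)
    fix K :: "(real^'n) set"
    assume K: "convex_body K \<and> rot_symmetric K H1 \<and> rot_symmetric K H2"
    have "closed K" using K by (simp add: convex_body_def compact_imp_closed)
    have r1: "rot_symmetric K (range (\<lambda>t. t *\<^sub>R h1))" using K h1(2) by simp
    have r2: "rot_symmetric K (range (\<lambda>t. t *\<^sub>R h2))" using K h2(2) by simp
    have sym: "z \<in> K" if "y \<in> K" "norm z = norm y" for y z
      by (rule core[OF n3 h1(1) h2(1) cc \<open>closed K\<close> rotsym_P[OF h1(1) r1] rotsym_P[OF h2(1) r2] that])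
    show "ball_at_origin K" using K sym_convex_ball sym by blast
  qed
  show ?thesis using S1 S2 S3 S4 S5 by blast
qed

lemma partB:
  assumes n4: "CARD('n) \<ge> 4"
  shows "\<exists>(H :: nat \<Rightarrow> (real^'n) set) K.
        inj_on H {1..k} \<and>
        (\<forall>j\<in>{1..k}. subspace (H j) \<and> 2 \<le> dim (H j) \<and> dim (H j) \<le> CARD('n) - 2) \<and>
        convex_body K \<and> (\<forall>j\<in>{1..k}. rot_symmetric K (H j)) \<and> \<not> ball_at_origin K"
proof -
  obtain S :: "'n set" where S: "card S = 3"
    using obtain_subset_with_card_n[of 3 "UNIV :: 'n set"] n4 by auto
  then obtain a b c :: 'n where abc: "a \<noteq> b" "b \<noteq> c" "a \<noteq> c" unfolding card_3_iff by blast
  define ea :: "real^'n" where "ea = axis a 1"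
  define v :: "nat \<Rightarrow> real^'n" where "v j = axis b 1 + real j *\<^sub>R axis c 1" for j
  define H where "H j = span {ea, v j}" for j
  have comp: "ea $ a = 1" "ea $ b = 0" "ea $ c = 0" "v j $ a = 0" "v j $ b = 1" "v j $ c = real j" for j
    using abc by (simp_all add: ea_def v_def axis_def)
  have lin: "x $ c = real j * x $ b" if "x \<in> H j" for x j
  proof -
    have "subspace {x :: real^'n. x $ c = real j * x $ b}"
      by (auto simp: subspace_def algebra_simps)
    moreover have "y $ c = real j * y $ b" if "y \<in> {ea, v j}" for y using that comp by auto
    ultimately show ?thesis using span_induct[of x "{ea, v j}" "\<lambda>x. x $ c = real j * x $ b"] \<open>x \<in> H j\<close>
      by (simp add: H_def)
  qed
  have inj: "inj_on H {1..k}"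
  proof (rule inj_onI)
    fix i j assume "H i = H j"
    have "v i \<in> H i" by (simp add: H_def span_base)
    then have "v i \<in> H j" using \<open>H i = H j\<close> by simp
    then have "real i = real j" using lin[of "v i" j] comp by simp
    then show "i = j" by simp
  qed
  have dims: "subspace (H j) \<and> 2 \<le> dim (H j) \<and> dim (H j) \<le> CARD('n) - 2" for j
  proof -
    have ne: "ea \<noteq> v j" using comp(2)[of] comp(5)[of j] by auto
    have "ea \<bullet> v j = 0" using comp unfolding ea_def by (simp add: inner_axis' inner_commute[of "axis a 1"] inner_axis)
    then have "pairwise orthogonal {ea, v j}" by (auto simp: pairwise_def orthogonal_def inner_commute)
    moreover have "0 \<notin> {ea, v j}" using comp(1) comp(5)[of j] by auto
    ultimately have "independent {ea, v j}" by (rule pairwise_orthogonal_independent)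
    then have "dim (H j) = 2" using ne by (simp add: H_def dim_eq_card_independent)
    then show ?thesis using n4 by (simp add: H_def)
  qed
  have rs: "rot_symmetric (cyl a) (H j)" for j
    by (rule cyl_rotsym) (auto simp: H_def ea_def span_base)
  show ?thesis
    using inj dims rs cyl_body[of a] cyl_not_ball[OF abc(1)] by blast
qed


theorem corollary4p3:
  shows
  "(CARD('n) \<ge> 3 \<longrightarrow>
     (\<forall>H1 H2 :: (real^'n) set.
        subspace H1 \<and> dim H1 = 1 \<and> subspace H2 \<and> dim H2 = 1 \<and> H1 \<noteq> H2 \<longrightarrow>
          setsum (orthogonal_comp H1) (orthogonal_comp H2) = UNIV
        \<and> \<not> orth_decomposable {orthogonal_comp H1, orthogonal_comp H2}
        \<and> (\<forall>E. E \<subseteq> sphere 0 1 \<and> E \<noteq> {} \<and> closed E \<and>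
              (\<forall>H\<in>{H1, H2}. \<forall>x\<in>E. sphere 0 1 \<inter> ((+) x ` orthogonal_comp H) \<subseteq> E)
              \<longrightarrow> E = sphere 0 1)
        \<and> (\<forall>F. closed F \<and> (\<forall>Q. rotation_fixing H1 Q \<longrightarrow> (\<lambda>x. Q *v x) ` F \<subseteq> F)
                 \<and> (\<forall>Q. rotation_fixing H2 Q \<longrightarrow> (\<lambda>x. Q *v x) ` F \<subseteq> F)
              \<longrightarrow> union_of_spheres_at 0 F)
        \<and> (\<forall>K. convex_body K \<and> rot_symmetric K H1 \<and> rot_symmetric K H2
              \<longrightarrow> ball_at_origin K)))
   \<and>
   (CARD('n) \<ge> 4 \<longrightarrow>
     (\<forall>k::nat. \<exists>(H :: nat \<Rightarrow> (real^'n) set) K.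
        inj_on H {1..k} \<and>
        (\<forall>j\<in>{1..k}. subspace (H j) \<and> 2 \<le> dim (H j) \<and> dim (H j) \<le> CARD('n) - 2) \<and>
        convex_body K \<and> (\<forall>j\<in>{1..k}. rot_symmetric K (H j)) \<and> \<not> ball_at_origin K))"
    apply (rule conjI)
   apply (intro impI allI)
   apply (rule partA; assumption)
  apply (intro impI allI)
  apply (rule partB; assumption)
  done

end
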